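(* Let $(U,\mathrm{dist})$ be a metric space, $\varepsilon,\delta,\gamma>0$, $\eta>0$, $\Lambda\in\mathbb{R}_{>0}\cup\{\infty\}$. Let $g_L(x,x')=1+\gamma\,\mathrm{dist}(x,x')$. Let $f:U\to\mathbb{R}$ and let $B(\cdot)$ be a $g_L$-smooth upper bound on $\mathrm{L}_{f,\Lambda}$. Then the mechanism $M$ which on input $x$ releases $M(x)=f(x)+\frac{B(x)}{\eta}Z$ with $Z\sim\mathrm{Lap}(0,1)$ is $(\varepsilon,\delta,\Lambda)$-GP with $\varepsilon=\eta+\gamma\ln(1/\delta)$.
   Context: $\mathrm{L}_{f,\Lambda}(x)$ is the infimum of all $K$ such that $|f(x)-f(x')|\le K\,\mathrm{dist}(x,x')$ for all $x'\in U$ with $\mathrm{dist}(x,x')\le\Lambda$. A $g$-smooth upper bound on $\mathrm{L}_{f,\Lambda}$ is $B:U\to\mathbb{R}_{\ge0}$ with (1) $B(x)\ge\mathrm{L}_{f,\Lambda}(x)$ for all $x$ and (2) $B(x)\le g(x,x')B(x')$ for all $x,x'\in U$. $\mathrm{Lap}(0,1)$ has density $\frac12e^{-|y|}$. A mechanism $M$ with outputs in $\mathbb{R}$ is $(\varepsilon,\delta,\Lambda)$-GP if for every measurable $S\subseteq\mathbb{R}$ and all $x,x'$ with $\mathrm{dist}(x,x')\le\Lambda$: $\Pr[M(x)\in S]\le e^{\varepsilon\,\mathrm{dist}(x,x')}\Pr[M(x')\in S]+\delta$. *)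

theory Defs
  imports "HOL-Probability.Probability"
begin

text \<open>Lambda is an extended real so that Lambda = infinity is allowed.\<close>
definition local_lip :: "('a::metric_space \<Rightarrow> real) \<Rightarrow> ereal \<Rightarrow> 'a \<Rightarrow> ereal" where
  "local_lip f \<Lambda> x = Inf {ereal K | K. \<forall>x'. ereal (dist x x') \<le> \<Lambda> \<longrightarrow>
      \<bar>f x - f x'\<bar> \<le> K * dist x x'}"

definition smooth_upper_bound ::
  "('a::metric_space \<Rightarrow> 'a \<Rightarrow> real) \<Rightarrow> ('a \<Rightarrow> real) \<Rightarrow> ereal \<Rightarrow> ('a \<Rightarrow> real) \<Rightarrow> bool" where
  "smooth_upper_bound g f \<Lambda> B \<longleftrightarrow>
     (\<forall>x. B x \<ge> 0) \<and>
     (\<forall>x. local_lip f \<Lambda> x \<le> ereal (B x)) \<and>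
     (\<forall>x x'. B x \<le> g x x' * B x')"

definition laplace_measure :: "real measure" where
  "laplace_measure = density lborel (\<lambda>y. ennreal (exp (- \<bar>y\<bar>) / 2))"

definition laplace_mech :: "('a \<Rightarrow> real) \<Rightarrow> ('a \<Rightarrow> real) \<Rightarrow> real \<Rightarrow> 'a \<Rightarrow> real measure" where
  "laplace_mech f B \<eta> x = distr laplace_measure borel (\<lambda>z. f x + B x / \<eta> * z)"

definition is_GP :: "('a::metric_space \<Rightarrow> real measure) \<Rightarrow> real \<Rightarrow> real \<Rightarrow> ereal \<Rightarrow> bool" where
  "is_GP M \<epsilon> \<delta> \<Lambda> \<longleftrightarrow>
     (\<forall>S \<in> sets borel. \<forall>x x'. ereal (dist x x') \<le> \<Lambda> \<longrightarrow>
        measure (M x) S \<le> exp (\<epsilon> * dist x x') * measure (M x') S + \<delta>)"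

end

theory Submission
  imports Defs
begin


lemma lip_bound:
  fixes f :: "'a::metric_space \<Rightarrow> real"
  assumes "local_lip f \<Lambda> x \<le> ereal b" "ereal (dist x x') \<le> \<Lambda>"
  shows "\<bar>f x - f x'\<bar> \<le> b * dist x x'"
proof (rule ccontr)
  assume A: "\<not> ?thesis"
  define d where "d = dist x x'"
  have dpos: "d > 0"
  proof (rule ccontr)
    assume "\<not> d > 0"
    then have "d = 0" using zero_le_dist[of x x'] unfolding d_def by linarith
    then have "x = x'" unfolding d_def by simp
    then show False using A by simp
  qed
  define K' where "K' = (b + \<bar>f x - f x'\<bar> / d) / 2"
  have gt: "\<bar>f x - f x'\<bar> / d > b" using A dpos unfolding d_def by (simp add: pos_less_divide_eq mult.commute)
  have bK: "b < K'" using gt unfolding K'_def by simp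
  have "local_lip f \<Lambda> x < ereal K'" using assms(1) bK by (simp add: le_less_trans)
  then have "\<exists>e\<in>{ereal K | K. \<forall>x'. ereal (dist x x') \<le> \<Lambda> \<longrightarrow>
      \<bar>f x - f x'\<bar> \<le> K * dist x x'}. e < ereal K'"
    unfolding local_lip_def by (simp only: Inf_less_iff)
  then obtain K0 where K0: "ereal K0 < ereal K'" "\<forall>x'. ereal (dist x x') \<le> \<Lambda> \<longrightarrow>
      \<bar>f x - f x'\<bar> \<le> K0 * dist x x'" by auto
  have c1: "\<bar>f x - f x'\<bar> \<le> K0 * d" using K0(2) assms(2) unfolding d_def by blast
  have c2: "K0 * d < K' * d" using K0(1) dpos by simp
  have c3: "K' * d < \<bar>f x - f x'\<bar>" using gt dpos unfolding K'_def by (simp add: field_simps)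
  show False using c1 c2 c3 by linarith
qed

lemma mech_emeasure:
  assumes [measurable]: "S \<in> sets borel"
  shows "emeasure (laplace_mech f B \<eta> x) S =
    (\<integral>\<^sup>+ z. ennreal (exp (- \<bar>z\<bar>) / 2) * indicator S (f x + B x / \<eta> * z) \<partial>lborel)" (is "_ = ?rhs")
proof -
  define h where "h = (\<lambda>z. f x + B x / \<eta> * z)"
  have m: "h \<in> borel_measurable borel" unfolding h_def by simp
  have p: "h -` S \<in> sets lborel"
    using measurable_sets_borel[OF m assms] by simp
  have "emeasure (laplace_mech f B \<eta> x) S = emeasure laplace_measure (h -` S \<inter> space laplace_measure)"
    unfolding laplace_mech_def h_def[symmetric] by (rule emeasure_distr) (simp_all add: laplace_measure_def m)
  also have "\<dots> = emeasure laplace_measure (h -` S)"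
    by (simp add: laplace_measure_def)
  also have "\<dots> = (\<integral>\<^sup>+ z. ennreal (exp (- \<bar>z\<bar>) / 2) * indicator (h -` S) z \<partial>lborel)"
    unfolding laplace_measure_def by (rule emeasure_density[OF _ p]) simp
  also have "\<dots> = ?rhs"
  proof (intro nn_integral_cong)
    fix z
    have "indicator (h -` S) z = (indicator S (h z) :: ennreal)" by (simp add: indicator_def)
    then show "ennreal (exp (- \<bar>z\<bar>) / 2) * indicator (h -` S) z = ennreal (exp (- \<bar>z\<bar>) / 2) * indicator S (f x + B x / \<eta> * z)"
      by (simp only: h_def)
  qed
  finally show ?thesis .
qed

lemma tail_bound:
  assumes "a \<ge> 0"
  shows "(\<integral>\<^sup>+ z. ennreal (exp (- \<bar>z\<bar>) / 2) * indicator {z. a \<le> \<bar>z\<bar>} z \<partial>lborel) \<le> ennreal (exp (- a))"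
proof -
  define h1 where "h1 = (\<lambda>z::real. ennreal (exp (- z) / 2) * indicator {a..} z)"
  define h2 where "h2 = (\<lambda>z::real. ennreal (exp z / 2) * indicator {..-a} z)"
  have "(\<integral>\<^sup>+ z. ennreal (exp (- \<bar>z\<bar>) / 2) * indicator {z. a \<le> \<bar>z\<bar>} z \<partial>lborel)
     \<le> (\<integral>\<^sup>+ z. h1 z + h2 z \<partial>lborel)"
  proof (intro nn_integral_mono)
    fix z :: real
    show "ennreal (exp (- \<bar>z\<bar>) / 2) * indicator {z. a \<le> \<bar>z\<bar>} z \<le> h1 z + h2 z"
    proof (cases "a \<le> \<bar>z\<bar>")
      case True
      show ?thesis
      proof (cases "z \<ge> 0")
        case True
        then have "ennreal (exp (- \<bar>z\<bar>) / 2) * indicator {z. a \<le> \<bar>z\<bar>} z \<le> h1 z"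
          using \<open>a \<le> \<bar>z\<bar>\<close> by (simp add: h1_def indicator_def)
        then show ?thesis by (rule order.trans) (simp add: h2_def)
      next
        case False
        then have "ennreal (exp (- \<bar>z\<bar>) / 2) * indicator {z. a \<le> \<bar>z\<bar>} z \<le> h2 z"
          using \<open>a \<le> \<bar>z\<bar>\<close> by (simp add: h2_def indicator_def)
        then show ?thesis by (rule order.trans) (simp add: h1_def)
      qed
    qed (simp add: indicator_def)
  qed
  also have "\<dots> = (\<integral>\<^sup>+ z. h1 z \<partial>lborel) + (\<integral>\<^sup>+ z. h2 z \<partial>lborel)"
    by (rule nn_integral_add) (auto simp: h1_def h2_def)
  also have "(\<integral>\<^sup>+ z. h2 z \<partial>lborel) = (\<integral>\<^sup>+ z. h1 z \<partial>lborel)"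
    by (subst nn_integral_real_affine[where c="-1" and t=0]) (auto simp: h1_def h2_def h1_def split: split_indicator intro!: nn_integral_cong)
  also have "(\<integral>\<^sup>+ z. h1 z \<partial>lborel) = ennreal (exp (- a) / 2)"
  proof -
    have "(\<integral>\<^sup>+ z. h1 z \<partial>lborel) = (\<integral>\<^sup>+ z. h1 (a + 1 * z) \<partial>lborel)"
      by (subst nn_integral_real_affine[where c="1" and t=a]) (auto simp: h1_def)
    also have "\<dots> = (\<integral>\<^sup>+ z. ennreal (exp (- a) / 2) * (ennreal (z^0 * exp (- z)) * indicator {0..} z) \<partial>lborel)"
      by (intro nn_integral_cong) (auto simp: h1_def exp_add exp_diff exp_minus ennreal_mult'[symmetric] field_simps split: split_indicator)
    also have "\<dots> = ennreal (exp (- a) / 2) * (\<integral>\<^sup>+ z. ennreal (z^0 * exp (- z)) * indicator {0..} z \<partial>lborel)"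
      by (rule nn_integral_cmult) auto
    also have "\<dots> = ennreal (exp (- a) / 2)"
      by (subst nn_intergal_power_times_exp_Ici) simp
    finally show ?thesis .
  qed
  also have "ennreal (exp (- a) / 2) + ennreal (exp (- a) / 2) = ennreal (exp (- a))"
    by (subst ennreal_plus[symmetric]) auto
  finally show ?thesis by simp
qed



lemma key_ineq:
  fixes s s' d \<gamma> \<eta> \<delta> \<Delta> z :: real
  assumes s: "s > 0" and s': "s' > 0" and d: "d \<ge> 0" and g: "\<gamma> > 0" and e: "\<eta> > 0"
    and dl: "\<delta> > 0" "\<delta> < 1"
    and D: "\<bar>\<Delta>\<bar> \<le> \<eta> * s' * d" and h1: "s \<le> (1 + \<gamma> * d) * s'" and h2: "s' \<le> (1 + \<gamma> * d) * s"
  shows "exp (- \<bar>z\<bar>) / 2 \<le> exp ((\<eta> + \<gamma> * ln (1 / \<delta>)) * d) * (s / s') * (exp (- \<bar>\<Delta> / s' + s / s' * z\<bar>) / 2)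
     + (if s \<le> s' then \<delta> * (exp (- \<bar>z\<bar>) / 2) else exp (- \<bar>z\<bar>) / 2 * (if ln (1 / \<delta>) \<le> \<bar>z\<bar> then 1 else 0))"
proof -
  define L where "L = ln (1 / \<delta>)"
  define \<rho> where "\<rho> = s / s'"
  define u where "u = \<bar>z\<bar>"
  have u0: "u \<ge> 0" by (simp add: u_def)
  have rho0: "\<rho> > 0" using s s' by (simp add: \<rho>_def)
  have L1: "L \<ge> 1 - \<delta>"
  proof -
    have "ln \<delta> \<le> \<delta> - 1" using ln_le_minus_one dl by blast
    moreover have "L = - ln \<delta>" using dl by (simp add: L_def ln_div)
    ultimately show ?thesis by simp
  qed
  have L0: "L > 0" using dl by (simp add: L_def)
  have abs1: "\<bar>\<Delta> / s' + \<rho> * z\<bar> \<le> \<eta> * d + \<rho> * u"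
  proof -
    have "\<bar>\<Delta> / s' + \<rho> * z\<bar> \<le> \<bar>\<Delta>\<bar> / s' + \<rho> * u"
    proof -
      have "\<bar>\<Delta> / s' + \<rho> * z\<bar> \<le> \<bar>\<Delta> / s'\<bar> + \<bar>\<rho> * z\<bar>" by (rule abs_triangle_ineq)
      moreover have "\<bar>\<Delta> / s'\<bar> = \<bar>\<Delta>\<bar> / s'" using s' by simp
      moreover have "\<bar>\<rho> * z\<bar> = \<rho> * u" using rho0 by (simp add: u_def abs_mult)
      ultimately show ?thesis by linarith
    qed
    also have "\<bar>\<Delta>\<bar> / s' \<le> \<eta> * d" using D s' by (simp add: divide_le_eq mult.commute mult.left_commute)
    finally show ?thesis by simp
  qed
  define T where "T = exp ((\<eta> + \<gamma> * L) * d) * \<rho> * (exp (- \<bar>\<Delta> / s' + \<rho> * z\<bar>) / 2)"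
  have T: "T \<ge> exp (\<gamma> * L * d) * \<rho> * exp (- \<rho> * u) / 2"
  proof -
    have A: "exp ((\<eta> + \<gamma> * L) * d) * exp (- \<eta> * d - \<rho> * u) \<le> exp ((\<eta> + \<gamma> * L) * d) * exp (- \<bar>\<Delta> / s' + \<rho> * z\<bar>)"
      by (rule mult_left_mono) (use abs1 in simp_all)
    have eq: "exp ((\<eta> + \<gamma> * L) * d) * exp (- \<eta> * d - \<rho> * u) = exp (\<gamma> * L * d) * exp (- \<rho> * u)"
      by (simp add: exp_add[symmetric] algebra_simps)
    have "exp (\<gamma> * L * d) * exp (- \<rho> * u) \<le> exp ((\<eta> + \<gamma> * L) * d) * exp (- \<bar>\<Delta> / s' + \<rho> * z\<bar>)"
      using A unfolding eq .
    then have "\<rho> * (exp (\<gamma> * L * d) * exp (- \<rho> * u)) \<le> \<rho> * (exp ((\<eta> + \<gamma> * L) * d) * exp (- \<bar>\<Delta> / s' + \<rho> * z\<bar>))"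
      using rho0 by simp
    then show ?thesis unfolding T_def by (simp add: algebra_simps)
  qed
  show ?thesis
  proof (cases "s \<le> s'")
    case True
    have r1: "\<rho> \<le> 1" using True s' by (simp add: \<rho>_def)
    have r2: "1 \<le> \<rho> * (1 + \<gamma> * d)" using h2 s' by (simp add: \<rho>_def field_simps)
    have ee: "exp (- u) \<le> exp (- \<rho> * u)" using r1 u0 rho0 by (simp add: mult_left_le_one_le mult_le_cancel_right1)
    have "1 - \<delta> \<le> \<rho> * exp (\<gamma> * L * d)"
    proof -
      have "(1 - \<delta>) \<le> (1 - \<delta>) * (\<rho> * (1 + \<gamma> * d))" using r2 dl by simp
      also have "\<dots> = \<rho> * ((1 - \<delta>) + \<gamma> * d * (1 - \<delta>))" by (simp add: algebra_simps)
      also have "\<dots> \<le> \<rho> * (1 + \<gamma> * L * d)"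
      proof -
        have "\<gamma> * d * (1 - \<delta>) \<le> \<gamma> * d * L" using L1 g d by (simp add: mult_left_mono)
        then have "(1 - \<delta>) + \<gamma> * d * (1 - \<delta>) \<le> 1 + \<gamma> * L * d" using dl by (simp add: algebra_simps)
        then show ?thesis using rho0 by (intro mult_left_mono) auto
      qed
      also have "\<dots> \<le> \<rho> * exp (\<gamma> * L * d)" using rho0 by (simp add: exp_ge_add_one_self)
      finally show ?thesis .
    qed
    then have "(1 - \<delta>) * exp (- u) \<le> \<rho> * exp (\<gamma> * L * d) * exp (- \<rho> * u)"
      using ee dl by (intro mult_mono) auto
    then have "exp (- u) / 2 \<le> T + \<delta> * (exp (- u) / 2)" using T by (simp add: algebra_simps)
    then show ?thesis using True by (simp add: T_def L_def \<rho>_def u_def)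
  next
    case False
    have r1: "\<rho> > 1" using False s' by (simp add: \<rho>_def)
    have r2: "\<rho> \<le> 1 + \<gamma> * d" using h1 s' by (simp add: \<rho>_def field_simps)
    show ?thesis
    proof (cases "L \<le> u")
      case True
      have "0 \<le> T" unfolding T_def using rho0 by simp
      then show ?thesis using True False by (simp add: T_def L_def \<rho>_def u_def)
    next
      case Lu: False
      have "(\<rho> - 1) * u \<le> \<gamma> * d * L"
      proof -
        have "(\<rho> - 1) * u \<le> \<gamma> * d * u" using r2 u0 by (intro mult_right_mono) auto
        also have "\<dots> \<le> \<gamma> * d * L" using Lu g d by (intro mult_left_mono) auto
        finally show ?thesis .
      qed
      then have "exp (- u) \<le> exp (\<gamma> * L * d - \<rho> * u)" by (simp add: algebra_simps)
      also have "\<dots> = exp (\<gamma> * L * d) * exp (- \<rho> * u)" by (simp add: exp_add[symmetric])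
      also have "\<dots> \<le> \<rho> * (exp (\<gamma> * L * d) * exp (- \<rho> * u))" using r1 by simp
      finally have "exp (- u) / 2 \<le> T" using T by (simp add: algebra_simps)
      then show ?thesis using Lu False by (simp add: T_def L_def \<rho>_def u_def)
    qed
  qed
qed


lemma enn_pt:
  fixes a k q r :: real
  assumes "a \<le> k * q + r" "0 \<le> k" "0 \<le> q" "0 \<le> r"
  shows "ennreal a * indicator S y \<le> ennreal k * (ennreal q * indicator S y) + ennreal r"
proof (cases "y \<in> S")
  case True
  have "ennreal a \<le> ennreal (k * q + r)" using assms(1) by (rule ennreal_leI)
  also have "\<dots> = ennreal k * ennreal q + ennreal r"
    using assms by (simp add: ennreal_plus ennreal_mult)
  finally show ?thesis using True by simp
qed simp

lemma mech_le1:
  assumes "S \<in> sets borel"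
  shows "emeasure (laplace_mech f B \<eta> x) S \<le> 1"
proof -
  have "emeasure (laplace_mech f B \<eta> x) S =
    (\<integral>\<^sup>+ z. ennreal (exp (- \<bar>z\<bar>) / 2) * indicator S (f x + B x / \<eta> * z) \<partial>lborel)"
    by (rule mech_emeasure[OF assms])
  also have "\<dots> \<le> (\<integral>\<^sup>+ z. ennreal (exp (- \<bar>z\<bar>) / 2) * indicator {z. 0 \<le> \<bar>z\<bar>} z \<partial>lborel)"
    by (intro nn_integral_mono) (simp add: indicator_def)
  also have "\<dots> \<le> ennreal (exp (- 0))" by (rule tail_bound) simp
  finally show ?thesis by simp
qed

lemma meas_R:
  "(\<lambda>z::real. ennreal (if P then d * (exp (- \<bar>z\<bar>) / 2) else exp (- \<bar>z\<bar>) / 2 * (if c \<le> \<bar>z\<bar> then 1 else 0))) \<in> borel_measurable lborel"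
  by measurable

lemma meas_A:
  assumes [measurable]: "S \<in> sets borel"
  shows "(\<lambda>z::real. ennreal K * (ennreal (exp (- \<bar>a + b * z\<bar>) / 2) * indicator S (m + s * z))) \<in> borel_measurable lborel"
  by measurable

theorem mainTheorem6:
  fixes f B :: "'a::metric_space \<Rightarrow> real"
    and \<epsilon> \<delta> \<gamma> \<eta> :: real and \<Lambda> :: ereal
  assumes "\<delta> > 0" and "\<gamma> > 0" and "\<eta> > 0" and "\<Lambda> > 0"
    and "smooth_upper_bound (\<lambda>x x'. 1 + \<gamma> * dist x x') f \<Lambda> B"
    and "\<epsilon> = \<eta> + \<gamma> * ln (1 / \<delta>)"
  shows "is_GP (laplace_mech f B \<eta>) \<epsilon> \<delta> \<Lambda>"
  unfolding is_GP_def
proof (intro ballI allI impI)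
  fix S :: "real set" and x x' :: 'a
  assume S[measurable]: "S \<in> sets borel" and dx: "ereal (dist x x') \<le> \<Lambda>"
  have Bnn: "\<And>x. B x \<ge> 0" and lipB: "\<And>x. local_lip f \<Lambda> x \<le> ereal (B x)"
    and sm: "\<And>x x'. B x \<le> (1 + \<gamma> * dist x x') * B x'"
    using assms(5) unfolding smooth_upper_bound_def by auto
  define d where "d = dist x x'"
  have d0: "d \<ge> 0" by (simp add: d_def)
  have dx': "ereal (dist x' x) \<le> \<Lambda>" using dx by (simp add: dist_commute)
  define Mx where "Mx = laplace_mech f B \<eta> x"
  define Mx' where "Mx' = laplace_mech f B \<eta> x'"
  have e1: "emeasure Mx S \<le> 1" unfolding Mx_def by (rule mech_le1[OF S])
  have e2: "emeasure Mx' S \<le> 1" unfolding Mx'_def by (rule mech_le1[OF S])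
  have fin1: "emeasure Mx S \<noteq> top" using e1 ennreal_one_less_top by (metis le_less_trans less_top)
  have fin2: "emeasure Mx' S \<noteq> top" using e2 ennreal_one_less_top by (metis le_less_trans less_top)
  have em1: "emeasure Mx S = ennreal (measure Mx S)" using fin1 by (simp add: emeasure_eq_ennreal_measure)
  have em2: "emeasure Mx' S = ennreal (measure Mx' S)" using fin2 by (simp add: emeasure_eq_ennreal_measure)
  have m1: "measure Mx S \<le> 1" using e1 em1 by simp
  have m2: "measure Mx' S \<ge> 0" by simp
  have main: "measure Mx S \<le> exp (\<epsilon> * d) * measure Mx' S + \<delta>"
  proof (cases "\<delta> \<ge> 1")
    case True
    have "0 \<le> exp (\<epsilon> * d) * measure Mx' S" by simp
    then show ?thesis using m1 True by linarith
  next
    case False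
    then have dl1: "\<delta> < 1" by simp
    have Lpos: "ln (1 / \<delta>) > 0" using dl1 assms(1) by simp
    have epos: "\<epsilon> > 0" using assms(2,3,6) Lpos by (simp add: add_pos_nonneg)
    have K1: "exp (\<epsilon> * d) \<ge> 1" using epos d0 by simp
    show ?thesis
    proof (cases "B x = 0")
      case True
      have "B x' \<le> (1 + \<gamma> * dist x' x) * B x" by (rule sm)
      then have Bx': "B x' = 0" using True Bnn[of x'] by simp
      have "\<bar>f x - f x'\<bar> \<le> B x * dist x x'" by (rule lip_bound[OF lipB dx])
      then have "f x = f x'" using True by simp
      then have "Mx = Mx'" unfolding Mx_def Mx'_def laplace_mech_def using True Bx' by simp
      moreover have "measure Mx' S \<le> exp (\<epsilon> * d) * measure Mx' S"
        using K1 m2 by (simp add: mult_le_cancel_right1)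
      ultimately show ?thesis using assms(1) by simp
    next
      case False
      then have bpos: "B x > 0" using Bnn[of x] by simp
      have "B x \<le> (1 + \<gamma> * dist x x') * B x'" by (rule sm)
      then have bpos': "B x' > 0" using bpos Bnn[of x'] d0 assms(2)
        by (metis d_def less_eq_real_def mult_zero_right not_less)
      define s where "s = B x / \<eta>"
      define s' where "s' = B x' / \<eta>"
      define m where "m = f x"
      define m' where "m' = f x'"
      define L where "L = ln (1 / \<delta>)"
      have s0: "s > 0" and s0': "s' > 0" using bpos bpos' assms(3) by (simp_all add: s_def s'_def)
      have D: "\<bar>m - m'\<bar> \<le> \<eta> * s' * d"
      proof -
        have "\<bar>f x' - f x\<bar> \<le> B x' * dist x' x" by (rule lip_bound[OF lipB dx'])
        then show ?thesis using assms(3) by (simp add: m_def m'_def s'_def d_def dist_commute abs_minus_commute)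
      qed
      have h1: "s \<le> (1 + \<gamma> * d) * s'"
      proof -
        have "B x / \<eta> \<le> ((1 + \<gamma> * d) * B x') / \<eta>"
          using sm[of x x'] assms(3) by (intro divide_right_mono) (auto simp: d_def)
        then show ?thesis by (simp add: s_def s'_def)
      qed
      have h2: "s' \<le> (1 + \<gamma> * d) * s"
      proof -
        have "B x' / \<eta> \<le> ((1 + \<gamma> * d) * B x) / \<eta>"
          using sm[of x' x] assms(3) by (intro divide_right_mono) (auto simp: d_def dist_commute)
        then show ?thesis by (simp add: s_def s'_def)
      qed
      define K where "K = exp (\<epsilon> * d) * (s / s')"
      have K0: "K \<ge> 0" using s0 s0' by (simp add: K_def)
      have E1: "emeasure Mx S = (\<integral>\<^sup>+ z. ennreal (exp (- \<bar>z\<bar>) / 2) * indicator S (m + s * z) \<partial>lborel)"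
        unfolding Mx_def m_def s_def by (rule mech_emeasure[OF S])
      have E2: "emeasure Mx' S = ennreal (s / s') * (\<integral>\<^sup>+ z. ennreal (exp (- \<bar>(m - m') / s' + s / s' * z\<bar>) / 2) * indicator S (m + s * z) \<partial>lborel)"
      proof -
        have "emeasure Mx' S = (\<integral>\<^sup>+ w. ennreal (exp (- \<bar>w\<bar>) / 2) * indicator S (m' + s' * w) \<partial>lborel)"
          unfolding Mx'_def m'_def s'_def by (rule mech_emeasure[OF S])
        also have "\<dots> = ennreal \<bar>s / s'\<bar> * (\<integral>\<^sup>+ z. ennreal (exp (- \<bar>(m - m') / s' + s / s' * z\<bar>) / 2) * indicator S (m' + s' * ((m - m') / s' + s / s' * z)) \<partial>lborel)"
          by (rule nn_integral_real_affine) (use s0 s0' in auto)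
        also have "\<dots> = ennreal (s / s') * (\<integral>\<^sup>+ z. ennreal (exp (- \<bar>(m - m') / s' + s / s' * z\<bar>) / 2) * indicator S (m + s * z) \<partial>lborel)"
        proof -
          have "\<And>z. m' + s' * ((m - m') / s' + s / s' * z) = m + s * z" using s0' by (simp add: field_simps)
          then show ?thesis using s0 s0' by simp
        qed
        finally show ?thesis .
      qed
      define I2 where "I2 = (\<integral>\<^sup>+ z. ennreal (exp (- \<bar>(m - m') / s' + s / s' * z\<bar>) / 2) * indicator S (m + s * z) \<partial>lborel)"
      define R where "R = (\<lambda>z::real. if s \<le> s' then \<delta> * (exp (- \<bar>z\<bar>) / 2) else exp (- \<bar>z\<bar>) / 2 * (if ln (1 / \<delta>) \<le> \<bar>z\<bar> then 1 else 0))"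
      have R0: "\<And>z. R z \<ge> 0" using assms(1) by (simp add: R_def)
      have pt: "\<And>z. ennreal (exp (- \<bar>z\<bar>) / 2) * indicator S (m + s * z)
          \<le> ennreal K * (ennreal (exp (- \<bar>(m - m') / s' + s / s' * z\<bar>) / 2) * indicator S (m + s * z)) + ennreal (R z)"
      proof -
        fix z
        have "exp (- \<bar>z\<bar>) / 2 \<le> K * (exp (- \<bar>(m - m') / s' + s / s' * z\<bar>) / 2) + R z"
          using key_ineq[OF s0 s0' d0 assms(2) assms(3) assms(1) dl1 D h1 h2, of z]
          unfolding K_def R_def assms(6) by (simp add: mult.assoc)
        then show "?thesis z" by (rule enn_pt) (use K0 R0 in auto)
      qed
      have IR: "(\<integral>\<^sup>+ z. ennreal (R z) \<partial>lborel) \<le> ennreal \<delta>"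
      proof (cases "s \<le> s'")
        case True
        have "(\<integral>\<^sup>+ z. ennreal (R z) \<partial>lborel) = (\<integral>\<^sup>+ z. ennreal \<delta> * (ennreal (exp (- \<bar>z\<bar>) / 2) * indicator {z. 0 \<le> \<bar>z\<bar>} z) \<partial>lborel)"
          using True assms(1) by (intro nn_integral_cong) (simp add: R_def ennreal_mult[symmetric] indicator_def)
        also have "\<dots> = ennreal \<delta> * (\<integral>\<^sup>+ z. ennreal (exp (- \<bar>z\<bar>) / 2) * indicator {z. 0 \<le> \<bar>z\<bar>} z \<partial>lborel)"
          by (rule nn_integral_cmult) simp
        also have "\<dots> \<le> ennreal \<delta> * ennreal (exp (- 0))"
          by (intro mult_left_mono tail_bound) auto
        finally show ?thesis by simp
      next
        case False
        have "(\<integral>\<^sup>+ z. ennreal (R z) \<partial>lborel) = (\<integral>\<^sup>+ z. ennreal (exp (- \<bar>z\<bar>) / 2) * indicator {z. ln (1 / \<delta>) \<le> \<bar>z\<bar>} z \<partial>lborel)"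
          using False by (intro nn_integral_cong) (simp add: R_def indicator_def)
        also have "\<dots> \<le> ennreal (exp (- ln (1 / \<delta>)))"
          by (rule tail_bound) (use Lpos in simp)
        also have "exp (- ln (1 / \<delta>)) = \<delta>" using assms(1) by (simp add: ln_div)
        finally show ?thesis .
      qed
      have mA: "(\<lambda>z. ennreal K * (ennreal (exp (- \<bar>(m - m') / s' + s / s' * z\<bar>) / 2) * indicator S (m + s * z))) \<in> borel_measurable lborel"
        by (rule meas_A[OF S])
      have mR: "(\<lambda>z. ennreal (R z)) \<in> borel_measurable lborel"
        unfolding R_def by (rule meas_R)
      have "emeasure Mx S \<le> (\<integral>\<^sup>+ z. ennreal K * (ennreal (exp (- \<bar>(m - m') / s' + s / s' * z\<bar>) / 2) * indicator S (m + s * z)) + ennreal (R z) \<partial>lborel)"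
        unfolding E1 by (intro nn_integral_mono pt)
      also have "\<dots> = (\<integral>\<^sup>+ z. ennreal K * (ennreal (exp (- \<bar>(m - m') / s' + s / s' * z\<bar>) / 2) * indicator S (m + s * z)) \<partial>lborel) + (\<integral>\<^sup>+ z. ennreal (R z) \<partial>lborel)"
        by (rule nn_integral_add[OF mA mR])
      also have "(\<integral>\<^sup>+ z. ennreal K * (ennreal (exp (- \<bar>(m - m') / s' + s / s' * z\<bar>) / 2) * indicator S (m + s * z)) \<partial>lborel) = ennreal K * I2"
        unfolding I2_def by (rule nn_integral_cmult) simp
      also have "ennreal K * I2 = ennreal (exp (\<epsilon> * d)) * emeasure Mx' S"
        unfolding E2 I2_def[symmetric] K_def using s0 s0' by (simp add: ennreal_mult mult.assoc del: times_divide_eq_right)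
      finally have "emeasure Mx S \<le> ennreal (exp (\<epsilon> * d)) * emeasure Mx' S + (\<integral>\<^sup>+ z. ennreal (R z) \<partial>lborel)" .
      then have "emeasure Mx S \<le> ennreal (exp (\<epsilon> * d)) * emeasure Mx' S + ennreal \<delta>"
        using add_left_mono[OF IR] by (rule order_trans)
      then have "ennreal (measure Mx S) \<le> ennreal (exp (\<epsilon> * d) * measure Mx' S + \<delta>)"
        unfolding em1 em2 using assms(1) by (simp add: ennreal_mult ennreal_plus)
      moreover have "0 \<le> exp (\<epsilon> * d) * measure Mx' S + \<delta>" using assms(1) m2 by simp
      ultimately show ?thesis by (simp only: ennreal_le_iff)
    qed
  qed
  then show "measure (laplace_mech f B \<eta> x) S \<le> exp (\<epsilon> * dist x x') * measure (laplace_mech f B \<eta> x') S + \<delta>"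
    by (simp add: Mx_def Mx'_def d_def)
qed

end
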